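(* Let $s\in S(2^\infty)$ with $s^2=e$, $s\ne e$, and let $\mathrm{supp}(s)=\{x\in X: s(x)\neq x\}$. Then in $G=S(2^\infty)\ltimes \widetilde C(X;\mathbb{Z}_2)$, $$\mathrm{fpc}(s)=\{e,\ s,\ \widetilde f_{\mathrm{supp}(s)},\ s\widetilde f_{\mathrm{supp}(s)}\}.$$
   Context: For a group $G$ and $g\in G$, $C_G(g)$ is the centralizer of $g$ and $\mathrm{fpc}(g)=\{h\in G:\ \{t^{-1}ht: t\in C_G(g)\}\text{ is finite}\}$. For $n\ge1$ let $S(2^n)$ be the symmetric group of the finite set $\{0,1\}^n$, embedded in $S(2^{n+1})$ via $s\mapsto\tilde s$, $\tilde s(x,y)=(s(x),y)$ ($x\in\{0,1\}^n$, $y\in\{0,1\}$); $S(2^\infty)=\bigcup_n S(2^n)$. Let $X=\{0,1\}^{\mathbb N}$; $S(2^\infty)$ acts on $X$ by homeomorphisms via $s(x,y)=(s(x),y)$ for $s\in S(2^n)$, $x\in\{0,1\}^n$, $y\in\{0,1\}^{\mathbb N}$. $C(X;\mathbb Z_2)$ is the abelian group of continuous maps $X\to\mathbb Z_2$ under pointwise addition; its elements are $f_A=\mathbf 1_A$ for clopen $A\subseteq X$, with $f_Af_B=f_{A\triangle B}$. $S(2^\infty)$ acts by $g\cdot f_A=f_{g(A)}$. The constant functions $\{f_\emptyset,f_X\}$ form an invariant subgroup and $\widetilde C(X;\mathbb Z_2)$ is the quotient group; $\widetilde f_A$ denotes the class of $f_A$ (so $\widetilde f_A=\widetilde f_{X\setminus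 A}$). $G=S(2^\infty)\ltimes\widetilde C(X;\mathbb Z_2)$, with $g\widetilde f_Ag^{-1}=\widetilde f_{g(A)}$. *)

theory Defs
  imports "HOL-Analysis.Analysis" "HOL-Algebra.Group" "HOL-Combinatorics.Permutations"
begin

text \<open>The Cantor space X = {0,1}^N, with the product topology (bool carries the
discrete = order topology, nat => bool the product topology from Function_Topology).\<close>
type_synonym cantor = "nat \<Rightarrow> bool"

definition prefix_of :: "nat \<Rightarrow> cantor \<Rightarrow> bool list" where
  "prefix_of n x = map x [0..<n]"

definition lift_perm :: "nat \<Rightarrow> (bool list \<Rightarrow> bool list) \<Rightarrow> cantor \<Rightarrow> cantor" where
  "lift_perm n \<sigma> x = (\<lambda>i. if i < n then \<sigma> (prefix_of n x) ! i else x i)"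

text \<open>S(2^infinity), realised as the union over n of the images of S(2^n) acting on X
(the embeddings S(2^n) -> S(2^(n+1)) are compatible with the action on X, and the
action is faithful, so elements are identified with the maps of X they induce).\<close>
definition S2inf :: "(cantor \<Rightarrow> cantor) set" where
  "S2inf = {g. \<exists>n \<sigma>. \<sigma> permutes {xs. length xs = n} \<and> g = lift_perm n \<sigma>}"

definition clopen_set :: "cantor set \<Rightarrow> bool" where
  "clopen_set A \<longleftrightarrow> open A \<and> closed A"

text \<open>The class of f_A in C(X;Z_2) modulo constants: f_A ~ f_(X - A).\<close>
definition fcls :: "cantor set \<Rightarrow> cantor set set" where
  "fcls A = {A, - A}"

text \<open>G = S(2^inf) |x C~(X;Z_2). The pair (g, fcls A) stands for the element g * f~_A.
Product: (g f_A)(h f_B) = g h f_(h^-1 A) f_B = (g o h, class of (h^-1 A) symdiff B).\<close>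
definition Gsd :: "((cantor \<Rightarrow> cantor) \<times> cantor set set) monoid" where
  "Gsd = \<lparr> carrier = {(g, F). g \<in> S2inf \<and> (\<exists>A. clopen_set A \<and> F = fcls A)},
          mult = (\<lambda>(g, F) (h, K). (g \<circ> h,
                    {((h -` A) - B) \<union> (B - (h -` A)) | A B. A \<in> F \<and> B \<in> K})),
          one = (id, fcls {}) \<rparr>"

definition centralizer :: "('a, 'b) monoid_scheme \<Rightarrow> 'a \<Rightarrow> 'a set" where
  "centralizer G g = {t \<in> carrier G. t \<otimes>\<^bsub>G\<^esub> g = g \<otimes>\<^bsub>G\<^esub> t}"

definition fpc :: "('a, 'b) monoid_scheme \<Rightarrow> 'a \<Rightarrow> 'a set" where
  "fpc G g = {h \<in> carrier G.
     finite {inv\<^bsub>G\<^esub> t \<otimes>\<^bsub>G\<^esub> h \<otimes>\<^bsub>G\<^esub> t | t. t \<in> centralizer G g}}"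

definition supp :: "(cantor \<Rightarrow> cantor) \<Rightarrow> cantor set" where
  "supp s = {x. s x \<noteq> x}"

end

theory Submission
  imports Defs "HOL-Library.Infinite_Set"
begin


abbreviation hinv :: "('a \<Rightarrow> 'b) \<Rightarrow> 'b \<Rightarrow> 'a" where "hinv f \<equiv> inv_into UNIV f"


definition cyl :: "nat \<Rightarrow> cantor \<Rightarrow> cantor set" where
  "cyl m x = {z. \<forall>i<m. z i = x i}"
definition sd :: "'a set \<Rightarrow> 'a set \<Rightarrow> 'a set" where
  "sd X Y = (X - Y) \<union> (Y - X)"
definition flip :: "nat \<Rightarrow> cantor \<Rightarrow> cantor" where
  "flip c x = x(c := \<not> x c)"
definition loc :: "cantor set \<Rightarrow> bool" where
  "loc A \<longleftrightarrow> (\<forall>x. \<exists>m. \<forall>z\<in>cyl m x. (z \<in> A) = (x \<in> A))"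

lemma length_prefix[simp]: "length (prefix_of n x) = n"
  by (simp add: prefix_of_def)
lemma nth_prefix[simp]: "i < n \<Longrightarrow> prefix_of n x ! i = x i"
  by (simp add: prefix_of_def)
lemma prefix_eq_iff: "prefix_of n x = prefix_of n y \<longleftrightarrow> x \<in> cyl n y"
  by (auto simp: prefix_of_def cyl_def)
lemma cyl_refl[simp]: "x \<in> cyl m x" by (simp add: cyl_def)
lemma cyl_sym: "z \<in> cyl m x \<longleftrightarrow> x \<in> cyl m z" by (auto simp: cyl_def)
lemma cyl_trans: "z \<in> cyl m x \<Longrightarrow> x \<in> cyl m y \<Longrightarrow> z \<in> cyl m y" by (auto simp: cyl_def)
lemma cyl_mono: "m \<le> M \<Longrightarrow> z \<in> cyl M x \<Longrightarrow> z \<in> cyl m x" by (auto simp: cyl_def)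
lemma flip_cyl: "M \<le> c \<Longrightarrow> flip c x \<in> cyl M x" by (auto simp: cyl_def flip_def)
lemma flip_notin: "v c = x c \<Longrightarrow> v \<notin> cyl (Suc c) (flip c x)"
  by (auto simp: cyl_def flip_def)
lemma flip_in: "flip c x \<in> cyl (Suc c) (flip c x)" by simp

lemma lp_low: "i < n \<Longrightarrow> lift_perm n \<tau> x i = \<tau> (prefix_of n x) ! i"
  by (simp add: lift_perm_def)
lemma lp_hi: "\<not> i < n \<Longrightarrow> lift_perm n \<tau> x i = x i"
  by (simp add: lift_perm_def)
lemma perm_len: "\<tau> permutes {xs. length xs = n} \<Longrightarrow> length xs = n \<Longrightarrow> length (\<tau> xs) = n"
  using permutes_in_image[of \<tau> "{xs. length xs = n}" xs] by simp
lemma lp_prefix: "\<tau> permutes {xs. length xs = n} \<Longrightarrow> prefix_of n (lift_perm n \<tau> x) = \<tau> (prefix_of n x)"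
  by (rule nth_equalityI) (auto simp: perm_len lp_low)
lemma lp_cyl: "n \<le> L \<Longrightarrow> z \<in> cyl L w \<Longrightarrow> lift_perm n \<tau> z \<in> cyl L (lift_perm n \<tau> w)"
proof -
  assume a: "n \<le> L" "z \<in> cyl L w"
  then have "prefix_of n z = prefix_of n w" using prefix_eq_iff cyl_mono by blast
  then show ?thesis using a by (auto simp: cyl_def lift_perm_def)
qed
lemma lp_flip: "n \<le> c \<Longrightarrow> lift_perm n \<tau> (flip c z) = flip c (lift_perm n \<tau> z)"
proof -
  assume a: "n \<le> c"
  then have "prefix_of n (flip c z) = prefix_of n z" using prefix_eq_iff flip_cyl cyl_sym by blast
  then show ?thesis using a by (auto simp: flip_def lift_perm_def fun_eq_iff)
qed
lemma lp_fix: "\<tau> (prefix_of n z) = prefix_of n z \<Longrightarrow> lift_perm n \<tau> z = z"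
  by (auto simp: lift_perm_def fun_eq_iff)
lemma lp_fix_iff: "\<tau> permutes {xs. length xs = n} \<Longrightarrow> lift_perm n \<tau> z = z \<longleftrightarrow> \<tau> (prefix_of n z) = prefix_of n z"
proof -
  assume a: "\<tau> permutes {xs. length xs = n}"
  show ?thesis using lp_fix[of \<tau> n z] lp_prefix[OF a, of z] by auto
qed
lemma lp_comp: "\<tau> permutes {xs. length xs = n} \<Longrightarrow> \<rho> permutes {xs. length xs = n} \<Longrightarrow>
   lift_perm n \<tau> (lift_perm n \<rho> x) = lift_perm n (\<tau> \<circ> \<rho>) x"
proof -
  assume a: "\<tau> permutes {xs. length xs = n}" "\<rho> permutes {xs. length xs = n}"
  show ?thesis
  proof
    fix i show "lift_perm n \<tau> (lift_perm n \<rho> x) i = lift_perm n (\<tau> \<circ> \<rho>) x i"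
      by (cases "i < n") (simp_all add: lp_low lp_hi lp_prefix[OF a(2)])
  qed
qed
lemma lp_id: "lift_perm n id = id"
  by (auto simp: fun_eq_iff lift_perm_def)
lemma lp_moved: "lift_perm n \<tau> z \<noteq> z \<Longrightarrow> \<exists>i<n. lift_perm n \<tau> z i \<noteq> z i"
proof (rule ccontr)
  assume a: "lift_perm n \<tau> z \<noteq> z" "\<not> (\<exists>i<n. lift_perm n \<tau> z i \<noteq> z i)"
  have "lift_perm n \<tau> z i = z i" for i using a(2) lp_hi[of i n \<tau> z] by (cases "i < n") auto
  then show False using a(1) by auto
qed

lemma id_S2inf: "id \<in> S2inf"
  unfolding S2inf_def by (auto intro!: exI[of _ 0] exI[of _ id] simp: lp_id permutes_id)

lemma S2inf_inv:
  assumes "\<tau> permutes {xs. length xs = n}"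
  shows "bij (lift_perm n \<tau>)" "hinv (lift_perm n \<tau>) = lift_perm n (hinv \<tau>)"
proof -
  have i: "hinv \<tau> permutes {xs. length xs = n}" using assms permutes_inv by blast
  have c1: "\<tau> \<circ> hinv \<tau> = id" "hinv \<tau> \<circ> \<tau> = id" using permutes_inv_o[OF assms] by auto
  have 1: "lift_perm n \<tau> \<circ> lift_perm n (hinv \<tau>) = id"
    by (simp add: fun_eq_iff lp_comp[OF assms i] c1 lp_id)
  have 2: "lift_perm n (hinv \<tau>) \<circ> lift_perm n \<tau> = id"
    by (simp add: fun_eq_iff lp_comp[OF i assms] c1 lp_id)
  show "bij (lift_perm n \<tau>)" using 1 2 o_bij by blast
  show "hinv (lift_perm n \<tau>) = lift_perm n (hinv \<tau>)" using 1 2 inv_unique_comp by blast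
qed

lemma S2inf_bij: "g \<in> S2inf \<Longrightarrow> bij g"
  by (auto simp: S2inf_def S2inf_inv(1))
lemma S2inf_invS: "g \<in> S2inf \<Longrightarrow> hinv g \<in> S2inf"
proof -
  assume "g \<in> S2inf"
  then obtain n \<tau> where a: "\<tau> permutes {xs. length xs = n}" "g = lift_perm n \<tau>" by (auto simp: S2inf_def)
  have "hinv g = lift_perm n (hinv \<tau>)" using a S2inf_inv(2) by simp
  moreover have "hinv \<tau> permutes {xs. length xs = n}" using a(1) permutes_inv by blast
  ultimately show ?thesis by (auto simp: S2inf_def)
qed

lemma cyl_PiE: "cyl m x = (\<Pi>\<^sub>E i\<in>UNIV. (if i < m then {x i} else UNIV))"
unfolding set_eq_iff
proof
  fix z
  have "z \<in> (\<Pi>\<^sub>E i\<in>UNIV. (if i < m then {x i} else UNIV)) \<longleftrightarrow> (\<forall>i. z i \<in> (if i < m then {x i} else UNIV))"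
    by (simp add: PiE_iff)
  also have "\<dots> \<longleftrightarrow> z \<in> cyl m x" unfolding cyl_def by (simp add: if_split)
  finally show "z \<in> cyl m x \<longleftrightarrow> z \<in> (\<Pi>\<^sub>E i\<in>UNIV. (if i < m then {x i} else UNIV))" by simp
qed

lemma open_cantor: "open (U::cantor set) \<longleftrightarrow> (\<forall>x\<in>U. \<exists>m. cyl m x \<subseteq> U)"
proof
  assume "open U"
  then have o: "openin (product_topology (\<lambda>i. euclidean) UNIV) U" by (simp add: open_fun_def)
  show "\<forall>x\<in>U. \<exists>m. cyl m x \<subseteq> U"
  proof
    fix x assume "x \<in> U"
    from product_topology_open_contains_basis[OF o this] obtain X where
      X: "x \<in> (\<Pi>\<^sub>E i\<in>UNIV. X i)" "finite {i. X i \<noteq> UNIV}" "(\<Pi>\<^sub>E i\<in>UNIV. X i) \<subseteq> U"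
      by auto
    obtain m where m: "{i. X i \<noteq> UNIV} \<subseteq> {..<m}" using X(2) finite_nat_bounded by blast
    have "cyl m x \<subseteq> (\<Pi>\<^sub>E i\<in>UNIV. X i)"
    proof
      fix z assume z: "z \<in> cyl m x"
      have "z i \<in> X i" for i
      proof (cases "X i = UNIV")
        case False then have "i < m" using m by auto
        then show ?thesis using z X(1) by (auto simp: cyl_def)
      qed simp
      then show "z \<in> (\<Pi>\<^sub>E i\<in>UNIV. X i)" by auto
    qed
    then show "\<exists>m. cyl m x \<subseteq> U" using X(3) by blast
  qed
next
  assume a: "\<forall>x\<in>U. \<exists>m. cyl m x \<subseteq> U"
  have oc: "open (cyl m x)" for m x
  proof -
    have "cyl m x = (\<Pi>\<^sub>E i\<in>UNIV. (if i < m then {x i} else UNIV))"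
      by (rule cyl_PiE)
    moreover have "open (\<Pi>\<^sub>E i\<in>UNIV. (if i < m then {x i} else UNIV))"
      by (rule open_PiE) (auto simp: open_discrete)
    ultimately show ?thesis by simp
  qed
  show "open U" unfolding open_subopen[of U]
  proof (intro ballI)
    fix x assume "x \<in> U"
    then obtain m where "cyl m x \<subseteq> U" using a by blast
    then show "\<exists>T. open T \<and> x \<in> T \<and> T \<subseteq> U" using oc[of m x] cyl_refl[of x m] by blast
  qed
qed

lemma clopen_loc: "clopen_set A \<longleftrightarrow> loc A"
proof -
  have "clopen_set A \<longleftrightarrow> open A \<and> open (- A)" by (simp add: clopen_set_def closed_def)
  also have "\<dots> \<longleftrightarrow> loc A"
  proof
    assume a: "open A \<and> open (- A)"
    show "loc A" unfolding loc_def
    proof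
      fix x
      show "\<exists>m. \<forall>z\<in>cyl m x. (z \<in> A) = (x \<in> A)"
      proof (cases "x \<in> A")
        case True
        have "\<forall>x\<in>A. \<exists>m. cyl m x \<subseteq> A" using a by (simp add: open_cantor)
        then obtain m where "cyl m x \<subseteq> A" using True by blast
        then have "\<forall>z\<in>cyl m x. (z \<in> A) = (x \<in> A)" using True by blast
        then show ?thesis by blast
      next
        case False
        have "open (-A)" using a by simp
        then have "\<forall>x\<in>-A. \<exists>m. cyl m x \<subseteq> -A" unfolding open_cantor .
        then obtain m where "cyl m x \<subseteq> - A" using False by blast
        then have "\<forall>z\<in>cyl m x. (z \<in> A) = (x \<in> A)" using False by blast
        then show ?thesis by blast
      qed
    qed
  next
    assume a: "loc A"
    have "open A" unfolding open_cantor
    proof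
      fix x assume "x \<in> A"
      obtain m where "\<forall>z\<in>cyl m x. (z \<in> A) = (x \<in> A)" using a unfolding loc_def by blast
      then have "cyl m x \<subseteq> A" using \<open>x \<in> A\<close> by blast
      then show "\<exists>m. cyl m x \<subseteq> A" by blast
    qed
    moreover have "open (- A)" unfolding open_cantor
    proof
      fix x assume "x \<in> - A"
      obtain m where "\<forall>z\<in>cyl m x. (z \<in> A) = (x \<in> A)" using a unfolding loc_def by blast
      then have "cyl m x \<subseteq> - A" using \<open>x \<in> - A\<close> by blast
      then show "\<exists>m. cyl m x \<subseteq> - A" by blast
    qed
    ultimately show "open A \<and> open (- A)" by simp
  qed
  finally show ?thesis .
qed



lemma sd_empty[simp]: "sd X {} = X" "sd {} X = X" "sd X X = {}" by (auto simp: sd_def)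

lemma fcls_compl[simp]: "fcls (- X) = fcls X"
  by (simp add: fcls_def insert_commute)
lemma fcls_eq: "fcls X = fcls Y \<longleftrightarrow> X = Y \<or> X = - Y"
proof
  assume a: "fcls X = fcls Y"
  have "X \<in> fcls X" by (simp add: fcls_def)
  then have "X \<in> fcls Y" using a by simp
  then show "X = Y \<or> X = - Y" by (simp add: fcls_def)
next
  assume "X = Y \<or> X = - Y"
  then show "fcls X = fcls Y" by (elim disjE) simp_all
qed
lemma fcls_empty_iff: "fcls X = fcls {} \<longleftrightarrow> X = {} \<or> X = UNIV"
  by (auto simp: fcls_eq)

lemma collect_pairs: "{f a b | a b. a \<in> X \<and> b \<in> Y} = (\<lambda>p. f (fst p) (snd p)) ` (X \<times> Y)"
proof (rule Set.set_eqI)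
  fix z
  show "z \<in> {f a b | a b. a \<in> X \<and> b \<in> Y} \<longleftrightarrow> z \<in> (\<lambda>p. f (fst p) (snd p)) ` (X \<times> Y)"
  proof
    assume "z \<in> {f a b | a b. a \<in> X \<and> b \<in> Y}"
    then obtain a b where "z = f a b" "a \<in> X" "b \<in> Y" by blast
    then show "z \<in> (\<lambda>p. f (fst p) (snd p)) ` (X \<times> Y)" by (intro image_eqI[of _ _ "(a, b)"]) auto
  next
    assume "z \<in> (\<lambda>p. f (fst p) (snd p)) ` (X \<times> Y)"
    then obtain p where "p \<in> X \<times> Y" "z = f (fst p) (snd p)" by blast
    then show "z \<in> {f a b | a b. a \<in> X \<and> b \<in> Y}" by (cases p) auto
  qed
qed

lemma mult_fcls: "(g, fcls A) \<otimes>\<^bsub>Gsd\<^esub> (h, fcls B) = (g \<circ> h, fcls (sd (h -` A) B))"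
proof -
  let ?f = "\<lambda>X Y. (h -` X - Y) \<union> (Y - h -` X)"
  let ?C = "sd (h -` A) B"
  have e1: "?f A (-B) = - ?C" "?f (-A) B = - ?C" "?f (-A) (-B) = ?C"
    "?f A B = ?C" by (auto simp: sd_def)
  have "{?f A' B' | A' B'. A' \<in> fcls A \<and> B' \<in> fcls B} = (\<lambda>p. ?f (fst p) (snd p)) ` (fcls A \<times> fcls B)"
    by (rule collect_pairs)
  also have "fcls A \<times> fcls B = {(A, B), (A, -B), (-A, B), (-A, -B)}"
    by (simp add: fcls_def)
  also have "(\<lambda>p. ?f (fst p) (snd p)) ` {(A, B), (A, -B), (-A, B), (-A, -B)} = {?C, -?C}"
    by (simp only: image_insert image_empty fst_conv snd_conv e1) (simp add: insert_commute)
  finally have eq: "{?f A' B' | A' B'. A' \<in> fcls A \<and> B' \<in> fcls B} = fcls ?C"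
    by (simp add: fcls_def)
  show ?thesis unfolding Gsd_def using eq by simp
qed
lemma one_Gsd: "\<one>\<^bsub>Gsd\<^esub> = (id, fcls {})"
  by (simp add: Gsd_def)
lemma carrier_Gsd: "(g, F) \<in> carrier Gsd \<longleftrightarrow> g \<in> S2inf \<and> (\<exists>A. clopen_set A \<and> F = fcls A)"
  by (simp add: Gsd_def)

lemma clopen_compl: "clopen_set A \<Longrightarrow> clopen_set (- A)"
  by (simp add: clopen_set_def closed_def)
lemma clopen_empty: "clopen_set {}" "clopen_set UNIV"
  by (simp_all add: clopen_set_def)
lemma loc_sd: "loc A \<Longrightarrow> loc B \<Longrightarrow> loc (sd A B)"
proof -
  assume a: "loc A" "loc B"
  show ?thesis unfolding loc_def
  proof
    fix x
    obtain m1 where m1: "\<forall>z\<in>cyl m1 x. (z \<in> A) = (x \<in> A)" using a(1) unfolding loc_def by blast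
    obtain m2 where m2: "\<forall>z\<in>cyl m2 x. (z \<in> B) = (x \<in> B)" using a(2) unfolding loc_def by blast
    have "\<forall>z\<in>cyl (max m1 m2) x. (z \<in> sd A B) = (x \<in> sd A B)"
    proof
      fix z assume z: "z \<in> cyl (max m1 m2) x"
      have "z \<in> cyl m1 x" using cyl_mono[OF _ z] by simp
      moreover have "z \<in> cyl m2 x" using cyl_mono[OF _ z] by simp
      ultimately have "(z \<in> A) = (x \<in> A)" "(z \<in> B) = (x \<in> B)" using m1 m2 by blast+
      then show "(z \<in> sd A B) = (x \<in> sd A B)" by (simp add: sd_def)
    qed
    then show "\<exists>m. \<forall>z\<in>cyl m x. (z \<in> sd A B) = (x \<in> sd A B)" by blast
  qed
qed
lemma loc_Un: "loc A \<Longrightarrow> loc B \<Longrightarrow> loc (A \<union> B)"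
proof -
  assume a: "loc A" "loc B"
  show ?thesis unfolding loc_def
  proof
    fix x
    obtain m1 where m1: "\<forall>z\<in>cyl m1 x. (z \<in> A) = (x \<in> A)" using a(1) unfolding loc_def by blast
    obtain m2 where m2: "\<forall>z\<in>cyl m2 x. (z \<in> B) = (x \<in> B)" using a(2) unfolding loc_def by blast
    have "\<forall>z\<in>cyl (max m1 m2) x. (z \<in> A \<union> B) = (x \<in> A \<union> B)"
    proof
      fix z assume z: "z \<in> cyl (max m1 m2) x"
      have "z \<in> cyl m1 x" using cyl_mono[OF _ z] by simp
      moreover have "z \<in> cyl m2 x" using cyl_mono[OF _ z] by simp
      ultimately have "(z \<in> A) = (x \<in> A)" "(z \<in> B) = (x \<in> B)" using m1 m2 by blast+
      then show "(z \<in> A \<union> B) = (x \<in> A \<union> B)" by (simp add: sd_def)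
    qed
    then show "\<exists>m. \<forall>z\<in>cyl m x. (z \<in> A \<union> B) = (x \<in> A \<union> B)" by blast
  qed
qed
lemma loc_cyl: "loc (cyl L a)"
  unfolding loc_def
proof
  fix x show "\<exists>m. \<forall>z\<in>cyl m x. (z \<in> cyl L a) = (x \<in> cyl L a)"
    by (rule exI[of _ L]) (meson cyl_sym cyl_trans)
qed

lemma S2inf_loc: "g \<in> S2inf \<Longrightarrow> \<exists>N \<tau>. \<tau> permutes {xs. length xs = N} \<and> g = lift_perm N \<tau>"
  by (simp add: S2inf_def)

lemma clopen_vimage: "g \<in> S2inf \<Longrightarrow> clopen_set A \<Longrightarrow> clopen_set (g -` A)"
proof -
  assume g: "g \<in> S2inf" and A: "clopen_set A"
  obtain N \<tau> where gt: "g = lift_perm N \<tau>" using S2inf_loc[OF g] by auto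
  show ?thesis unfolding clopen_loc loc_def
  proof
    fix x
    obtain m where m: "\<forall>z\<in>cyl m (g x). (z \<in> A) = (g x \<in> A)" using A unfolding clopen_loc loc_def by blast
    have "\<forall>z\<in>cyl (max m N) x. (z \<in> g -` A) = (x \<in> g -` A)"
    proof
      fix z assume "z \<in> cyl (max m N) x"
      then have "g z \<in> cyl (max m N) (g x)" using lp_cyl[of N "max m N" z x \<tau>] gt by simp
      then have "g z \<in> cyl m (g x)" using cyl_mono by (meson max.cobounded1)
      then have "(g z \<in> A) = (g x \<in> A)" using m by blast
      then show "(z \<in> g -` A) = (x \<in> g -` A)" by simp
    qed
    then show "\<exists>m. \<forall>z\<in>cyl m x. (z \<in> g -` A) = (x \<in> g -` A)" by blast
  qed
qed

lemma hinv_comp: "g \<in> S2inf \<Longrightarrow> g \<circ> hinv g = id \<and> hinv g \<circ> g = id"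
proof -
  assume g: "g \<in> S2inf"
  have b: "bij g" by (rule S2inf_bij[OF g])
  have "g \<circ> hinv g = id" using surj_iff[of g] bij_is_surj[OF b] by simp
  moreover have "hinv g \<circ> g = id" using inj_iff[of g] bij_is_inj[OF b] by simp
  ultimately show ?thesis by simp
qed

lemma inv_Gsd:
  assumes g: "g \<in> S2inf" and A: "clopen_set A"
  shows "inv\<^bsub>Gsd\<^esub> (g, fcls A) = (hinv g, fcls (hinv g -` A))"
  unfolding m_inv_def
proof (rule the_equality)
  have c: "g \<circ> hinv g = id" "hinv g \<circ> g = id" using hinv_comp[OF g] by auto
  have "g -` hinv g -` A = (hinv g \<circ> g) -` A" by (simp add: vimage_comp)
  then have v: "g -` hinv g -` A = A" using c(2) by simp
  show "(hinv g, fcls (hinv g -` A)) \<in> carrier Gsd \<and>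
    (g, fcls A) \<otimes>\<^bsub>Gsd\<^esub> (hinv g, fcls (hinv g -` A)) = \<one>\<^bsub>Gsd\<^esub> \<and>
    (hinv g, fcls (hinv g -` A)) \<otimes>\<^bsub>Gsd\<^esub> (g, fcls A) = \<one>\<^bsub>Gsd\<^esub>"
  proof -
    have cin: "(hinv g, fcls (hinv g -` A)) \<in> carrier Gsd" unfolding carrier_Gsd
      using S2inf_invS[OF g] clopen_vimage[OF S2inf_invS[OF g] A] by blast
    have m1: "(g, fcls A) \<otimes>\<^bsub>Gsd\<^esub> (hinv g, fcls (hinv g -` A)) = \<one>\<^bsub>Gsd\<^esub>"
      by (simp add: mult_fcls one_Gsd c)
    have m2: "(hinv g, fcls (hinv g -` A)) \<otimes>\<^bsub>Gsd\<^esub> (g, fcls A) = \<one>\<^bsub>Gsd\<^esub>"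
      by (simp add: mult_fcls one_Gsd c v)
    show ?thesis using cin m1 m2 by blast
  qed
next
  fix y assume y: "y \<in> carrier Gsd \<and> (g, fcls A) \<otimes>\<^bsub>Gsd\<^esub> y = \<one>\<^bsub>Gsd\<^esub> \<and> y \<otimes>\<^bsub>Gsd\<^esub> (g, fcls A) = \<one>\<^bsub>Gsd\<^esub>"
  obtain h F where hF: "y = (h, F)" by (cases y)
  have "(h, F) \<in> carrier Gsd" using y hF by simp
  then obtain C where "F = fcls C" unfolding carrier_Gsd by blast
  then have hC: "y = (h, fcls C)" using hF by simp
  have "(g \<circ> h, fcls (sd (h -` A) C)) = (id, fcls {})" using y unfolding hC by (simp add: mult_fcls one_Gsd)
  then have e: "g \<circ> h = id" "fcls (sd (h -` A) C) = fcls {}" by simp_all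
  have c: "hinv g \<circ> g = id" using hinv_comp[OF g] by simp
  have "h = (hinv g \<circ> g) \<circ> h" using c by simp
  also have "\<dots> = hinv g \<circ> (g \<circ> h)" by (simp add: comp_assoc)
  also have "\<dots> = hinv g" using e(1) by simp
  finally have "h = hinv g" .
  moreover have "fcls C = fcls (h -` A)"
  proof -
    have "sd (h -` A) C = {} \<or> sd (h -` A) C = UNIV" using e(2) fcls_empty_iff by blast
    then have "C = h -` A \<or> C = - (h -` A)" by (auto simp: sd_def set_eq_iff)
    then show ?thesis using fcls_eq by blast
  qed
  ultimately show "y = (hinv g, fcls (hinv g -` A))" using hC by simp
qed

lemma conj_Gsd:
  assumes g: "g \<in> S2inf" and A: "clopen_set A"
  shows "inv\<^bsub>Gsd\<^esub> (g, fcls A) \<otimes>\<^bsub>Gsd\<^esub> (k, fcls B) \<otimes>\<^bsub>Gsd\<^esub> (g, fcls A) =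
     (hinv g \<circ> k \<circ> g, fcls (sd (sd ((hinv g \<circ> k \<circ> g) -` A) (g -` B)) A))"
proof -
  have "g -` sd (k -` hinv g -` A) B = sd ((hinv g \<circ> k \<circ> g) -` A) (g -` B)"
    by (auto simp: sd_def)
  then show ?thesis by (simp add: inv_Gsd[OF g A] mult_fcls comp_assoc)
qed




lemma supp_lp_loc: "\<tau> permutes {xs. length xs = N} \<Longrightarrow> x' \<in> cyl N x \<Longrightarrow>
    (x' \<in> supp (lift_perm N \<tau>)) = (x \<in> supp (lift_perm N \<tau>))"
proof -
  assume a: "\<tau> permutes {xs. length xs = N}" "x' \<in> cyl N x"
  have "prefix_of N x' = prefix_of N x" using a(2) prefix_eq_iff by blast
  then show ?thesis by (simp add: supp_def lp_fix_iff[OF a(1)])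
qed

lemma supp_loc: "g \<in> S2inf \<Longrightarrow> loc (supp g)"
proof -
  assume "g \<in> S2inf"
  then obtain N \<tau> where a: "\<tau> permutes {xs. length xs = N}" "g = lift_perm N \<tau>" using S2inf_loc by blast
  show ?thesis unfolding loc_def
  proof
    fix x show "\<exists>m. \<forall>z\<in>cyl m x. (z \<in> supp g) = (x \<in> supp g)"
      using supp_lp_loc[OF a(1)] a(2) by blast
  qed
qed

definition ext :: "bool list \<Rightarrow> cantor" where
  "ext l = (\<lambda>i. if i < length l then l ! i else False)"

lemma prefix_ext: "length l = L \<Longrightarrow> prefix_of L (ext l) = l"
  by (rule nth_equalityI) (auto simp: ext_def)
lemma ext_cyl: "ext (prefix_of L w) \<in> cyl L w"
  by (auto simp: cyl_def ext_def)

lemma transp_conj: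
  assumes "f (f a) = a" "f (f b) = b" "f (f l) = l"
  shows "Transposition.transpose a b (f l) = f (Transposition.transpose (f a) (f b) l)"
proof (cases "l = f a")
  case True then show ?thesis using assms by simp
next
  case F1: False
  show ?thesis
  proof (cases "l = f b")
    case True then show ?thesis using assms by simp
  next
    case False
    have "f l \<noteq> a" using F1 assms(3) by metis
    moreover have "f l \<noteq> b" using False assms(3) by metis
    ultimately show ?thesis using F1 False by simp
  qed
qed

lemma transp_disj_comm:
  assumes "a \<noteq> a'" "a \<noteq> b'" "b \<noteq> a'" "b \<noteq> b'"
  shows "Transposition.transpose a b (Transposition.transpose a' b' l) = Transposition.transpose a' b' (Transposition.transpose a b l)"
  using assms by (cases "l = a"; cases "l = b"; cases "l = a'"; cases "l = b'") auto

locale invo =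
  fixes n :: nat and \<sigma> :: "bool list \<Rightarrow> bool list"
  assumes perm: "\<sigma> permutes {xs. length xs = n}"
    and inv2: "lift_perm n \<sigma> \<circ> lift_perm n \<sigma> = id"
begin

abbreviation s where "s \<equiv> lift_perm n \<sigma>"

definition sL :: "nat \<Rightarrow> bool list \<Rightarrow> bool list" where
  "sL L l = prefix_of L (s (ext l))"

lemma ss[simp]: "s (s z) = z" using fun_cong[OF inv2, of z] by simp
lemma s_S2inf: "s \<in> S2inf" using perm by (auto simp: S2inf_def)
lemma s_hi: "n \<le> i \<Longrightarrow> s z i = z i" by (simp add: lp_hi)
lemma s_cyl: "n \<le> L \<Longrightarrow> z \<in> cyl L w \<Longrightarrow> s z \<in> cyl L (s w)" by (rule lp_cyl)
lemma s_cyl_iff: "n \<le> L \<Longrightarrow> s z \<in> cyl L w \<longleftrightarrow> z \<in> cyl L (s w)"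
proof
  assume "n \<le> L" "s z \<in> cyl L w"
  then show "z \<in> cyl L (s w)" using s_cyl[of L "s z" w] by simp
next
  assume "n \<le> L" "z \<in> cyl L (s w)"
  then show "s z \<in> cyl L w" using s_cyl[of L z "s w"] by simp
qed
lemma s_flip: "n \<le> c \<Longrightarrow> s (flip c z) = flip c (s z)" by (rule lp_flip)
lemma s_moved: "s z \<noteq> z \<Longrightarrow> n \<le> M \<Longrightarrow> s z \<notin> cyl M z"
  using lp_moved[of n \<sigma> z] by (auto simp: cyl_def)
lemma s_vimage_cyl: "n \<le> L \<Longrightarrow> s -` cyl L a = cyl L (s a)"
  using s_cyl_iff by auto

lemma sL_P1: "n \<le> L \<Longrightarrow> prefix_of L (s w) = sL L (prefix_of L w)"
  unfolding sL_def prefix_eq_iff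
  using s_cyl[OF _ ext_cyl[of L w]] cyl_sym by blast
lemma sL_len[simp]: "length (sL L l) = L" by (simp add: sL_def)
lemma sL_inv: "n \<le> L \<Longrightarrow> length l = L \<Longrightarrow> sL L (sL L l) = l"
proof -
  assume a: "n \<le> L" "length l = L"
  have "sL L (sL L l) = sL L (prefix_of L (s (ext l)))" by (simp add: sL_def)
  also have "\<dots> = prefix_of L (s (s (ext l)))" by (rule sL_P1[OF a(1), symmetric])
  also have "\<dots> = l" using prefix_ext[OF a(2)] by simp
  finally show ?thesis .
qed

lemma comm_lp:
  assumes L: "n \<le> L" and t: "\<tau> permutes {xs. length xs = L}"
    and c: "\<And>l. length l = L \<Longrightarrow> \<tau> (sL L l) = sL L (\<tau> l)"
  shows "lift_perm L \<tau> \<circ> s = s \<circ> lift_perm L \<tau>"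
proof
  fix z
  let ?g = "lift_perm L \<tau>"
  have p: "prefix_of L (?g (s z)) = prefix_of L (s (?g z))"
    using lp_prefix[OF t] sL_P1[OF L] c by simp
  show "(?g \<circ> s) z = (s \<circ> ?g) z"
  proof
    fix i show "(?g \<circ> s) z i = (s \<circ> ?g) z i"
    proof (cases "i < L")
      case True
      have "(?g \<circ> s) z i = prefix_of L (?g (s z)) ! i" using True by simp
      also have "\<dots> = prefix_of L (s (?g z)) ! i" using p by simp
      also have "\<dots> = (s \<circ> ?g) z i" using True by simp
      finally show ?thesis .
    next
      case False
      then show ?thesis using L by (simp add: lp_hi s_hi)
    qed
  qed
qed

lemma swap_S2inf:
  "length a = L \<Longrightarrow> length b = L \<Longrightarrow> lift_perm L (Transposition.transpose a b) \<in> S2inf"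
  unfolding S2inf_def using permutes_swap_id[of a "{xs. length xs = L}" b] by auto

lemma swap2_S2inf:
  "length a = L \<Longrightarrow> length b = L \<Longrightarrow> length a' = L \<Longrightarrow> length b' = L \<Longrightarrow>
    lift_perm L (Transposition.transpose a b \<circ> Transposition.transpose a' b') \<in> S2inf"
  unfolding S2inf_def using permutes_swap_id[of a "{xs. length xs = L}" b]
    permutes_swap_id[of a' "{xs. length xs = L}" b'] permutes_compose by blast

lemma commA:
  assumes L: "n \<le> L" and la: "length a = L" and lb: "length b = L"
    and fa: "sL L a = a" and fb: "sL L b = b"
  shows "lift_perm L (Transposition.transpose a b) \<circ> s = s \<circ> lift_perm L (Transposition.transpose a b)"
proof (rule comm_lp[OF L])
  show "Transposition.transpose a b permutes {xs. length xs = L}" using la lb by (simp add: permutes_swap_id)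
  fix l :: "bool list" assume "length l = L"
  then show "Transposition.transpose a b (sL L l) = sL L (Transposition.transpose a b l)"
    using transp_conj[of "sL L" a b l] sL_inv[OF L] la lb fa fb by simp
qed

lemma commB1:
  assumes L: "n \<le> L" and la: "length a = L" and fa: "sL L a = b"
  shows "lift_perm L (Transposition.transpose a b) \<circ> s = s \<circ> lift_perm L (Transposition.transpose a b)"
proof (rule comm_lp[OF L])
  have lb: "length b = L" using fa by auto
  have fb: "sL L b = a" using fa sL_inv[OF L la] by simp
  show "Transposition.transpose a b permutes {xs. length xs = L}" using la lb by (simp add: permutes_swap_id)
  fix l :: "bool list" assume "length l = L"
  then show "Transposition.transpose a b (sL L l) = sL L (Transposition.transpose a b l)"
    using transp_conj[of "sL L" a b l] sL_inv[OF L] la lb fa fb by (simp add: transpose_commute)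
qed

lemma commB2:
  assumes L: "n \<le> L" and la: "length a = L" and lb: "length b = L"
    and d: "a \<noteq> sL L a" "a \<noteq> sL L b" "b \<noteq> sL L a" "b \<noteq> sL L b"
  shows "lift_perm L (Transposition.transpose a b \<circ> Transposition.transpose (sL L a) (sL L b)) \<circ> s =
         s \<circ> lift_perm L (Transposition.transpose a b \<circ> Transposition.transpose (sL L a) (sL L b))"
proof (rule comm_lp[OF L])
  let ?a = "sL L a" and ?b = "sL L b"
  show "Transposition.transpose a b \<circ> Transposition.transpose ?a ?b permutes {xs. length xs = L}"
    using la lb by (simp add: permutes_swap_id permutes_compose)
  fix l :: "bool list" assume l: "length l = L"
  have ia: "sL L ?a = a" and ib: "sL L ?b = b" using sL_inv[OF L] la lb by auto
  have 1: "Transposition.transpose ?a ?b (sL L l) = sL L (Transposition.transpose a b l)"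
    using transp_conj[of "sL L" ?a ?b l] ia ib sL_inv[OF L l] by simp
  have l2: "length (Transposition.transpose a b l) = L" using l la lb by (cases "l = a"; cases "l = b") auto
  have 2: "Transposition.transpose a b (sL L (Transposition.transpose a b l)) = sL L (Transposition.transpose ?a ?b (Transposition.transpose a b l))"
    using transp_conj[of "sL L" a b "Transposition.transpose a b l"] ia ib sL_inv[OF L l2] by simp
  show "(Transposition.transpose a b \<circ> Transposition.transpose ?a ?b) (sL L l) = sL L ((Transposition.transpose a b \<circ> Transposition.transpose ?a ?b) l)"
    using 1 2 transp_disj_comm[of ?a a b ?b l] d by (simp add: eq_commute)
qed

end



lemma inj_fam:
  assumes u: "\<And>i j. i \<noteq> j \<Longrightarrow> (u i \<in> E i) \<noteq> (u i \<in> E j)"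
    and v: "\<And>i j. (v \<in> E i) = (v \<in> E j)"
  shows "inj (\<lambda>i. fcls (E i))"
proof (rule injI)
  fix i j assume e: "fcls (E i) = fcls (E j)"
  show "i = j"
  proof (rule ccontr)
    assume ij: "i \<noteq> j"
    have "E i = E j \<or> E i = - E j" using e fcls_eq by blast
    then show False
    proof
      assume "E i = E j" then show False using u[OF ij] by simp
    next
      assume "E i = - E j" then show False using v[of i j] by simp
    qed
  qed
qed

lemma loc_get: "loc B \<Longrightarrow> \<exists>m. \<forall>M\<ge>m. \<forall>z\<in>cyl M x. (z \<in> B) = (x \<in> B)"
proof -
  assume "loc B"
  then obtain m where m: "\<forall>z\<in>cyl m x. (z \<in> B) = (x \<in> B)" unfolding loc_def by blast
  have "\<forall>M\<ge>m. \<forall>z\<in>cyl M x. (z \<in> B) = (x \<in> B)"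
  proof (intro allI impI ballI)
    fix M z assume "m \<le> M" "z \<in> cyl M x"
    then have "z \<in> cyl m x" using cyl_mono by blast
    then show "(z \<in> B) = (x \<in> B)" using m by blast
  qed
  then show ?thesis by blast
qed

lemma sepB:
  assumes "v \<in> cyl M x" "w \<in> cyl M y'" "\<forall>z\<in>cyl M x. z \<in> B" "y' \<notin> B" "M \<le> L"
  shows "prefix_of L v \<noteq> prefix_of L w"
proof
  assume "prefix_of L v = prefix_of L w"
  then have "v \<in> cyl L w" using prefix_eq_iff by blast
  then have "v \<in> cyl M w" using assms(5) cyl_mono by blast
  then have "y' \<in> cyl M x" using assms(1,2) by (meson cyl_sym cyl_trans)
  then show False using assms(3,4) by blast
qed

lemma lp_to: "\<tau> permutes {xs. length xs = L} \<Longrightarrow> \<tau> (prefix_of L z) = prefix_of L w \<Longrightarrow>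
   lift_perm L \<tau> z \<in> cyl L w"
proof -
  assume a: "\<tau> permutes {xs. length xs = L}" "\<tau> (prefix_of L z) = prefix_of L w"
  have "prefix_of L (lift_perm L \<tau> z) = prefix_of L w" using lp_prefix[OF a(1)] a(2) by simp
  then show ?thesis using prefix_eq_iff by blast
qed

lemma flip_inj: "flip c u = flip c v \<Longrightarrow> u = v"
proof
  fix i assume a: "flip c u = flip c v"
  have "flip c u i = flip c v i" using a by simp
  then show "u i = v i" by (cases "i = c") (auto simp: flip_def)
qed

context invo
begin

definition fam :: "cantor set \<Rightarrow> cantor \<Rightarrow> nat \<Rightarrow> (nat \<Rightarrow> cantor \<Rightarrow> cantor) \<Rightarrow> bool" where
  "fam B x M g \<longleftrightarrow> (\<forall>j. g j \<in> S2inf \<and> g j \<circ> s = s \<circ> g j \<and> g j (flip (M+j) x) \<notin> B \<and>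
       (\<forall>i. i \<noteq> j \<longrightarrow> g j (flip (M+i) x) = flip (M+i) x) \<and> g j x = x)"

lemma fam_infinite:
  assumes x: "x \<in> B" and cx: "\<forall>z\<in>cyl M x. z \<in> B" and f: "fam B x M g"
  shows "infinite {fcls (h -` B) | h. h \<in> S2inf \<and> h \<circ> s = s \<circ> h}"
proof -
  let ?E = "\<lambda>j. g j -` B"
  have u: "(flip (M+i) x \<in> ?E i) \<noteq> (flip (M+i) x \<in> ?E j)" if ij: "i \<noteq> j" for i j
  proof -
    have "flip (M+i) x \<notin> ?E i" using f unfolding fam_def by blast
    moreover have "g j (flip (M+i) x) = flip (M+i) x" using f ij unfolding fam_def by blast
    moreover have "flip (M+i) x \<in> B" using cx flip_cyl[of M "M+i" x] by simp
    ultimately show ?thesis by simp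
  qed
  have gx: "g j x = x" for j using f unfolding fam_def by blast
  have v: "(x \<in> ?E i) = (x \<in> ?E j)" for i j
    using gx[of i] gx[of j] by simp
  have inj: "inj (\<lambda>j. fcls (?E j))" by (rule inj_fam[OF u v])
  have "range (\<lambda>j. fcls (?E j)) \<subseteq> {fcls (h -` B) | h. h \<in> S2inf \<and> h \<circ> s = s \<circ> h}"
  proof
    fix Z assume "Z \<in> range (\<lambda>j. fcls (?E j))"
    then obtain j where j: "Z = fcls (?E j)" by blast
    have "g j \<in> S2inf \<and> g j \<circ> s = s \<circ> g j" using f unfolding fam_def by blast
    then show "Z \<in> {fcls (h -` B) | h. h \<in> S2inf \<and> h \<circ> s = s \<circ> h}" using j by blast
  qed
  moreover have "infinite (range (\<lambda>j. fcls (?E j)))" using range_inj_infinite[OF inj] .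
  ultimately show ?thesis using finite_subset by blast
qed

lemma caseA_one:
  assumes x: "x \<in> B" and y: "y \<notin> B" and sxy: "(s x = x \<and> s y = y) \<or> y = s x" and M: "n \<le> M"
    and cx: "\<forall>z\<in>cyl M x. z \<in> B" and cy: "\<forall>z\<in>cyl M y. z \<notin> B"
  shows "\<exists>h. h \<in> S2inf \<and> h \<circ> s = s \<circ> h \<and> h (flip (M+j) x) \<notin> B \<and>
       (\<forall>i. i \<noteq> j \<longrightarrow> h (flip (M+i) x) = flip (M+i) x) \<and> h x = x"
proof -
  define L where "L = Suc (M + j)"
  define a where "a = prefix_of L (flip (M+j) x)"
  define b where "b = prefix_of L (flip (M+j) y)"
  define h where "h = lift_perm L (Transposition.transpose a b)"
  have L: "n \<le> L" "M \<le> L" using M by (auto simp: L_def)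
  have la: "length a = L" and lb: "length b = L" by (simp_all add: a_def b_def)
  have tp: "Transposition.transpose a b permutes {xs. length xs = L}"
    using la lb by (simp add: permutes_swap_id)
  have hS: "h \<in> S2inf" unfolding h_def using swap_S2inf[OF la lb] .
  have hc: "h \<circ> s = s \<circ> h"
  proof (cases "y = s x")
    case True
    have sxj: "s (flip (M+j) x) = flip (M+j) y" using s_flip[of "M+j" x] True M by simp
    have fa: "sL L a = b" unfolding a_def b_def using sL_P1[OF L(1), of "flip (M+j) x"] sxj by simp
    show ?thesis unfolding h_def by (rule commB1[OF L(1) la fa])
  next
    case False
    then have xy: "s x = x" "s y = y" using sxy by auto
    have sxj: "s (flip (M+j) x) = flip (M+j) x" using s_flip[of "M+j" x] xy(1) M by simp
    have syj: "s (flip (M+j) y) = flip (M+j) y" using s_flip[of "M+j" y] xy(2) M by simp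
    have fa: "sL L a = a" unfolding a_def using sL_P1[OF L(1), of "flip (M+j) x"] sxj by simp
    have fb: "sL L b = b" unfolding b_def using sL_P1[OF L(1), of "flip (M+j) y"] syj by simp
    show ?thesis unfolding h_def by (rule commA[OF L(1) la lb fa fb])
  qed
  have "h (flip (M+j) x) \<in> cyl L (flip (M+j) y)"
    unfolding h_def by (rule lp_to[OF tp]) (simp add: a_def b_def)
  then have "h (flip (M+j) x) \<in> cyl M y"
    using cyl_mono[OF L(2)] flip_cyl[of M "M+j" y, OF le_add1] cyl_trans by blast
  then have i1: "h (flip (M+j) x) \<notin> B" using cy by blast
  have fixv: "h v = v" if v: "v \<in> cyl M x" "v (M+j) = x (M+j)" for v
  proof -
    have "prefix_of L v \<noteq> a" unfolding a_def prefix_eq_iff L_def by (rule flip_notin[of v "M+j" x, OF v(2)])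
    moreover have "prefix_of L v \<noteq> b" unfolding b_def
      by (rule sepB[OF v(1) flip_cyl[OF le_add1] cx y(1) L(2)])
    ultimately show "h v = v" unfolding h_def by (intro lp_fix) simp
  qed
  have i2: "\<forall>i. i \<noteq> j \<longrightarrow> h (flip (M+i) x) = flip (M+i) x"
  proof (intro allI impI)
    fix i assume "i \<noteq> j"
    then show "h (flip (M+i) x) = flip (M+i) x"
      by (intro fixv[OF flip_cyl[OF le_add1]]) (simp add: flip_def)
  qed
  have i3: "h x = x" by (rule fixv) simp_all
  show ?thesis using hS hc i1 i2 i3 by blast
qed


lemma caseB2_one:
  assumes x: "x \<in> B" "s x \<noteq> x" and y: "y \<notin> B" "s y \<noteq> y" "s y \<notin> B" and M: "n \<le> M"
    and cx: "\<forall>z\<in>cyl M x. z \<in> B" and cy: "\<forall>z\<in>cyl M y. z \<notin> B"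
  shows "\<exists>h. h \<in> S2inf \<and> h \<circ> s = s \<circ> h \<and> h (flip (M+j) x) \<notin> B \<and>
       (\<forall>i. i \<noteq> j \<longrightarrow> h (flip (M+i) x) = flip (M+i) x) \<and> h x = x"
proof -
  define L where "L = Suc (M + j)"
  define a where "a = prefix_of L (flip (M+j) x)"
  define b where "b = prefix_of L (flip (M+j) y)"
  define a' where "a' = sL L a"
  define b' where "b' = sL L b"
  define \<tau> where "\<tau> = Transposition.transpose a b \<circ> Transposition.transpose a' b'"
  define h where "h = lift_perm L \<tau>"
  have L: "n \<le> L" "M \<le> L" using M by (auto simp: L_def)
  have la: "length a = L" and lb: "length b = L" by (simp_all add: a_def b_def)
  have la': "length a' = L" and lb': "length b' = L" by (simp_all add: a'_def b'_def)
  have tp: "\<tau> permutes {xs. length xs = L}"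
    unfolding \<tau>_def using la lb la' lb' by (simp add: permutes_swap_id permutes_compose)
  have a'e: "a' = prefix_of L (flip (M+j) (s x))"
    unfolding a'_def a_def using sL_P1[OF L(1), of "flip (M+j) x"] s_flip[of "M+j" x] M by simp
  have b'e: "b' = prefix_of L (flip (M+j) (s y))"
    unfolding b'_def b_def using sL_P1[OF L(1), of "flip (M+j) y"] s_flip[of "M+j" y] M by simp
  have nb: "prefix_of L v \<noteq> b" if v: "v \<in> cyl M x" for v
    unfolding b_def by (rule sepB[OF v flip_cyl[OF le_add1] cx y(1) L(2)])
  have nb': "prefix_of L v \<noteq> b'" if v: "v \<in> cyl M x" for v
    unfolding b'e by (rule sepB[OF v flip_cyl[OF le_add1] cx y(3) L(2)])
  have na': "prefix_of L v \<noteq> a'" if v: "v \<in> cyl M x" for v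
  proof
    assume "prefix_of L v = a'"
    then have "v \<in> cyl L (flip (M+j) (s x))" unfolding a'e using prefix_eq_iff by blast
    then have "v \<in> cyl M (flip (M+j) (s x))" using cyl_mono[OF L(2)] by blast
    then have "v \<in> cyl M (s x)" using flip_cyl[of M "M+j" "s x", OF le_add1] cyl_trans by blast
    then have "s x \<in> cyl M x" using v by (meson cyl_sym cyl_trans)
    then show False using s_moved[OF x(2) M] by simp
  qed
  have xjc: "flip (M+j) x \<in> cyl M x" using flip_cyl[OF le_add1] .
  have d1: "a \<noteq> a'" unfolding a_def using na'[OF xjc] .
  have d2: "a \<noteq> b'" unfolding a_def using nb'[OF xjc] .
  have ia: "sL L a' = a" and ib: "sL L b' = b" using sL_inv[OF L(1)] la lb by (auto simp: a'_def b'_def)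
  have d3: "b \<noteq> a'"
  proof
    assume "b = a'"
    then have "b' = a" using ia by (simp add: b'_def)
    then show False using d2 by simp
  qed
  have d4: "b \<noteq> b'"
  proof
    assume e: "b = b'"
    have ne: "s (flip (M+j) y) \<noteq> flip (M+j) y"
      using s_flip[of "M+j" y] M y(2) flip_inj by fastforce
    have "s (flip (M+j) y) = flip (M+j) (s y)" using s_flip[of "M+j" y] M by simp
    then have "prefix_of L (flip (M+j) y) = prefix_of L (s (flip (M+j) y))" using e b_def b'e by simp
    then have "s (flip (M+j) y) \<in> cyl L (flip (M+j) y)" using prefix_eq_iff cyl_sym by blast
    then show False using s_moved[OF ne L(1)] by simp
  qed
  have hS: "h \<in> S2inf" unfolding h_def \<tau>_def using swap2_S2inf[OF la lb la' lb'] .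
  have hc: "h \<circ> s = s \<circ> h" unfolding h_def \<tau>_def a'_def b'_def
    by (rule commB2[OF L(1) la lb]) (use d1 d2 d3 d4 in \<open>simp_all add: a'_def b'_def\<close>)
  have "\<tau> a = b" unfolding \<tau>_def using d1 d2 by simp
  then have "h (flip (M+j) x) \<in> cyl L (flip (M+j) y)"
    unfolding h_def by (intro lp_to[OF tp]) (simp add: a_def b_def)
  then have "h (flip (M+j) x) \<in> cyl M y"
    using cyl_mono[OF L(2)] flip_cyl[of M "M+j" y, OF le_add1] cyl_trans by blast
  then have i1: "h (flip (M+j) x) \<notin> B" using cy by blast
  have fixv: "h v = v" if v: "v \<in> cyl M x" "v (M+j) = x (M+j)" for v
  proof -
    have "prefix_of L v \<noteq> a" unfolding a_def prefix_eq_iff L_def by (rule flip_notin[of v "M+j" x, OF v(2)])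
    then have "\<tau> (prefix_of L v) = prefix_of L v" unfolding \<tau>_def
      using nb[OF v(1)] na'[OF v(1)] nb'[OF v(1)] by simp
    then show "h v = v" unfolding h_def by (rule lp_fix)
  qed
  have i2: "\<forall>i. i \<noteq> j \<longrightarrow> h (flip (M+i) x) = flip (M+i) x"
  proof (intro allI impI)
    fix i assume "i \<noteq> j"
    then show "h (flip (M+i) x) = flip (M+i) x"
      by (intro fixv[OF flip_cyl[OF le_add1]]) (simp add: flip_def)
  qed
  have i3: "h x = x" by (rule fixv) simp_all
  show ?thesis using hS hc i1 i2 i3 by blast
qed

lemma key_pair:
  assumes lB: "loc B" and x: "x \<in> B" and y: "y \<notin> B"
    and c: "(s x = x \<and> s y = y) \<or> y = s x \<or> (s x \<noteq> x \<and> s y \<noteq> y \<and> s y \<notin> B)"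
  shows "infinite {fcls (h -` B) | h. h \<in> S2inf \<and> h \<circ> s = s \<circ> h}"
proof -
  obtain m1 where m1: "\<forall>M\<ge>m1. \<forall>z\<in>cyl M x. (z \<in> B) = (x \<in> B)" using loc_get[OF lB] by blast
  obtain m2 where m2: "\<forall>M\<ge>m2. \<forall>z\<in>cyl M y. (z \<in> B) = (y \<in> B)" using loc_get[OF lB] by blast
  define M where "M = max n (max m1 m2)"
  have M: "n \<le> M" "m1 \<le> M" "m2 \<le> M" by (auto simp: M_def)
  have cx: "\<forall>z\<in>cyl M x. z \<in> B" using m1 M(2) x by blast
  have cy: "\<forall>z\<in>cyl M y. z \<notin> B" using m2 M(3) y by blast
  have "\<forall>j. \<exists>h. h \<in> S2inf \<and> h \<circ> s = s \<circ> h \<and> h (flip (M+j) x) \<notin> B \<and>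
       (\<forall>i. i \<noteq> j \<longrightarrow> h (flip (M+i) x) = flip (M+i) x) \<and> h x = x"
  proof
    fix j
    show "\<exists>h. h \<in> S2inf \<and> h \<circ> s = s \<circ> h \<and> h (flip (M+j) x) \<notin> B \<and>
       (\<forall>i. i \<noteq> j \<longrightarrow> h (flip (M+i) x) = flip (M+i) x) \<and> h x = x"
    proof (cases "(s x = x \<and> s y = y) \<or> y = s x")
      case True
      then show ?thesis by (rule caseA_one[OF x y _ M(1) cx cy])
    next
      case False
      then have "s x \<noteq> x" "s y \<noteq> y" "s y \<notin> B" using c by auto
      then show ?thesis using caseB2_one[OF x _ y _ _ M(1) cx cy] by blast
    qed
  qed
  then obtain g where "\<forall>j. g j \<in> S2inf \<and> g j \<circ> s = s \<circ> g j \<and> g j (flip (M+j) x) \<notin> B \<and>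
       (\<forall>i. i \<noteq> j \<longrightarrow> g j (flip (M+i) x) = flip (M+i) x) \<and> g j x = x"
    by (rule choice[THEN exE])
  then have "fam B x M g" unfolding fam_def .
  then show ?thesis by (rule fam_infinite[OF x cx])
qed

lemma key:
  assumes lB: "loc B" and ne: "B \<noteq> {}" "B \<noteq> UNIV" "B \<noteq> supp s" "B \<noteq> - supp s"
  shows "infinite {fcls (h -` B) | h. h \<in> S2inf \<and> h \<circ> s = s \<circ> h}"
proof (cases "(\<exists>x\<in>B. s x = x) \<and> (\<exists>y. y \<notin> B \<and> s y = y)")
  case True
  then obtain x y where "x \<in> B" "s x = x" "y \<notin> B" "s y = y" by blast
  then show ?thesis using key_pair[OF lB] by blast
next
  case nPQ: False
  show ?thesis
  proof (cases "\<exists>x\<in>B. s x \<noteq> x \<and> s x \<notin> B")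
    case True
    then obtain x where "x \<in> B" "s x \<notin> B" by blast
    then show ?thesis using key_pair[OF lB, of x "s x"] by blast
  next
    case nB1: False
    show ?thesis
    proof (cases "(\<exists>x\<in>B. s x \<noteq> x) \<and> (\<exists>y. y \<notin> B \<and> s y \<noteq> y)")
      case True
      then obtain x y where xy: "x \<in> B" "s x \<noteq> x" "y \<notin> B" "s y \<noteq> y" by blast
      have "s y \<notin> B"
      proof
        assume sy: "s y \<in> B"
        have "s (s y) \<noteq> s y" using xy(4) by simp
        then have "s (s y) \<in> B" using nB1 sy by blast
        then show False using xy(3) by simp
      qed
      then show ?thesis using key_pair[OF lB xy(1) xy(3)] xy by blast
    next
      case nRT: False
      have "B = {} \<or> B = UNIV \<or> B = supp s \<or> B = - supp s"
      proof (cases "\<exists>x\<in>B. s x = x")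
        case P: True
        then have nQ: "\<forall>y. y \<notin> B \<longrightarrow> s y \<noteq> y" using nPQ by blast
        show ?thesis
        proof (cases "\<exists>x\<in>B. s x \<noteq> x")
          case True
          then have "\<forall>y. y \<notin> B \<longrightarrow> s y = y" using nRT by blast
          then have "B = UNIV" using nQ by blast
          then show ?thesis by blast
        next
          case False
          then have "B = - supp s" using nQ unfolding supp_def by blast
          then show ?thesis by blast
        qed
      next
        case nP: False
        show ?thesis
        proof (cases "\<exists>x\<in>B. s x \<noteq> x")
          case True
          then have "\<forall>y. y \<notin> B \<longrightarrow> s y = y" using nRT by blast
          then have "B = supp s" using nP unfolding supp_def by blast
          then show ?thesis by blast
        next
          case False
          then have "B = {}" using nP by blast
          then show ?thesis by blast
        qed
      qed
      then show ?thesis using ne by blast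
    qed
  qed
qed

end



context invo
begin

lemma step1:
  assumes k: "k \<in> S2inf" and kx: "k x \<noteq> x" "k x \<noteq> s x"
  shows "infinite {(k, fcls (sd (sd (k -` A) B) A)) | A. clopen_set A \<and> s -` A = A}"
proof -
  obtain m \<kappa> where km: "k = lift_perm m \<kappa>" using S2inf_loc[OF k] by auto
  define w where "w = k x"
  obtain i1 where i1: "x i1 \<noteq> w i1" using kx(1) unfolding w_def by (auto simp: fun_eq_iff)
  have "s w \<noteq> x" using kx(2) unfolding w_def by (metis ss)
  then obtain i2 where i2: "x i2 \<noteq> s w i2" by (auto simp: fun_eq_iff)
  define M where "M = max (max n m) (max (Suc i1) (Suc i2))"
  have M: "n \<le> M" "m \<le> M" "i1 < M" "i2 < M" by (auto simp: M_def)
  have nx1: "x \<notin> cyl M w" using i1 M(3) by (auto simp: cyl_def)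
  have nx2: "x \<notin> cyl M (s w)" using i2 M(4) by (auto simp: cyl_def)
  define wj where "wj j = flip (M+j) w" for j
  define Lj where "Lj j = Suc (M+j)" for j
  define A where "A j = cyl (Lj j) (wj j) \<union> cyl (Lj j) (s (wj j))" for j
  have LM: "M \<le> Lj j" "n \<le> Lj j" for j using M by (auto simp: Lj_def)
  have swj: "s (wj j) = flip (M+j) (s w)" for j unfolding wj_def using s_flip M(1) by simp
  have clA: "clopen_set (A j)" for j unfolding A_def clopen_loc by (intro loc_Un loc_cyl)
  have sA: "s -` A j = A j" for j
  proof -
    have "s -` A j = cyl (Lj j) (s (wj j)) \<union> cyl (Lj j) (s (s (wj j)))"
      unfolding A_def vimage_Un using s_vimage_cyl[OF LM(2)] by simp
    then show ?thesis unfolding A_def by auto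
  qed
  have nA1: "v \<notin> A j" if v: "v \<in> cyl M x" for v j
  proof
    assume "v \<in> A j"
    then show False unfolding A_def
    proof
      assume "v \<in> cyl (Lj j) (wj j)"
      then have "v \<in> cyl M (wj j)" using cyl_mono[OF LM(1)] by blast
      moreover have "wj j \<in> cyl M w" unfolding wj_def by (rule flip_cyl) simp
      ultimately have "v \<in> cyl M w" using cyl_trans by blast
      then have "x \<in> cyl M w" using v by (meson cyl_sym cyl_trans)
      then show False using nx1 by simp
    next
      assume "v \<in> cyl (Lj j) (s (wj j))"
      then have "v \<in> cyl M (s (wj j))" using cyl_mono[OF LM(1)] by blast
      moreover have "s (wj j) \<in> cyl M (s w)" unfolding swj by (rule flip_cyl) simp
      ultimately have "v \<in> cyl M (s w)" using cyl_trans by blast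
      then have "x \<in> cyl M (s w)" using v by (meson cyl_sym cyl_trans)
      then show False using nx2 by simp
    qed
  qed
  have nA2: "v \<notin> A j" if v: "v \<in> cyl M w" "v (M+j) = w (M+j)" for v j
  proof
    have n1: "v \<notin> cyl (Lj j) (wj j)" unfolding Lj_def wj_def by (rule flip_notin[of v "M+j" w, OF v(2)])
    assume "v \<in> A j"
    then have "v \<in> cyl (Lj j) (s (wj j))" using n1 unfolding A_def by blast
    show False
    proof (cases "s w = w")
      case True
      then have "s (wj j) = wj j" using swj by (simp add: wj_def)
      then show False using n1 \<open>v \<in> cyl (Lj j) (s (wj j))\<close> by simp
    next
      case False
      have "v \<in> cyl M (s (wj j))" using cyl_mono[OF LM(1)] \<open>v \<in> cyl (Lj j) (s (wj j))\<close> by blast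
      moreover have "s (wj j) \<in> cyl M (s w)" unfolding swj by (rule flip_cyl) simp
      ultimately have "v \<in> cyl M (s w)" using cyl_trans by blast
      then have "s w \<in> cyl M w" using v(1) by (meson cyl_sym cyl_trans)
      then show False using s_moved[OF False M(1)] by simp
    qed
  qed
  have ku: "k (flip (M+i) x) = wj i" for i
    unfolding km wj_def w_def using lp_flip[of m "M+i" \<kappa> x] M(2) km by simp
  define E where "E j = sd (sd (k -` A j) B) (A j)" for j
  have uxc: "flip (M+i) x \<in> cyl M x" for i by (rule flip_cyl) simp
  have u: "(flip (M+i) x \<in> E i) \<noteq> (flip (M+i) x \<in> E j)" if ij: "i \<noteq> j" for i j
  proof -
    have a1: "k (flip (M+i) x) \<in> A i" unfolding ku A_def by simp
    have a2: "flip (M+i) x \<notin> A i" "flip (M+i) x \<notin> A j" using nA1[OF uxc] by auto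
    have "wj i \<in> cyl M w" unfolding wj_def by (rule flip_cyl) simp
    moreover have "wj i (M+j) = w (M+j)" using ij unfolding wj_def flip_def by simp
    ultimately have a3: "k (flip (M+i) x) \<notin> A j" unfolding ku using nA2 by blast
    show ?thesis using a1 a2 a3 unfolding E_def sd_def by auto
  qed
  have v: "(x \<in> E i) = (x \<in> E j)" for i j
  proof -
    have "k x \<notin> A i" "k x \<notin> A j" unfolding w_def[symmetric] using nA2[of w] by auto
    moreover have "x \<notin> A i" "x \<notin> A j" using nA1[of x] by auto
    ultimately show ?thesis unfolding E_def sd_def by auto
  qed
  have inj: "inj (\<lambda>j. fcls (E j))" by (rule inj_fam[OF u v])
  then have inj2: "inj (\<lambda>j. (k, fcls (E j)))" by (auto simp: inj_def)
  have "range (\<lambda>j. (k, fcls (E j))) \<subseteq> {(k, fcls (sd (sd (k -` A) B) A)) | A. clopen_set A \<and> s -` A = A}"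
  proof
    fix Z assume "Z \<in> range (\<lambda>j. (k, fcls (E j)))"
    then obtain j where j: "Z = (k, fcls (E j))" by blast
    show "Z \<in> {(k, fcls (sd (sd (k -` A) B) A)) | A. clopen_set A \<and> s -` A = A}"
      unfolding j E_def using clA[of j] sA[of j] by blast
  qed
  moreover have "infinite (range (\<lambda>j. (k, fcls (E j))))" using range_inj_infinite[OF inj2] .
  ultimately show ?thesis using finite_subset by blast
qed


lemma cent_D:
  assumes t: "t \<in> centralizer Gsd (s, fcls {})"
  shows "\<exists>g A. t = (g, fcls A) \<and> g \<in> S2inf \<and> clopen_set A \<and> g \<circ> s = s \<circ> g \<and> fcls (s -` A) = fcls A"
proof -
  have tc: "t \<in> carrier Gsd" and tm: "t \<otimes>\<^bsub>Gsd\<^esub> (s, fcls {}) = (s, fcls {}) \<otimes>\<^bsub>Gsd\<^esub> t"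
    using t unfolding centralizer_def by auto
  obtain g F where gF: "t = (g, F)" by (cases t)
  have "(g, F) \<in> carrier Gsd" using tc gF by simp
  then obtain A where A: "F = fcls A" "g \<in> S2inf" "clopen_set A" unfolding carrier_Gsd by auto
  have "(g \<circ> s, fcls (s -` A)) = (s \<circ> g, fcls A)" using tm unfolding gF A(1) by (simp add: mult_fcls)
  then show ?thesis using gF A by auto
qed

lemma cent_I:
  assumes "g \<in> S2inf" "clopen_set A" "g \<circ> s = s \<circ> g" "fcls (s -` A) = fcls A"
  shows "(g, fcls A) \<in> centralizer Gsd (s, fcls {})"
proof -
  have "(g, fcls A) \<in> carrier Gsd" unfolding carrier_Gsd using assms(1,2) by blast
  moreover have "(g, fcls A) \<otimes>\<^bsub>Gsd\<^esub> (s, fcls {}) = (s, fcls {}) \<otimes>\<^bsub>Gsd\<^esub> (g, fcls A)"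
    using assms(3,4) by (simp add: mult_fcls)
  ultimately show ?thesis unfolding centralizer_def by blast
qed

lemma conj_k:
  assumes g: "g \<in> S2inf" "g \<circ> s = s \<circ> g" and k: "k = id \<or> k = s"
  shows "hinv g \<circ> k \<circ> g = k"
proof -
  have c: "hinv g \<circ> g = id" using hinv_comp[OF g(1)] by simp
  show ?thesis using k
  proof
    assume "k = id" then show ?thesis using c by simp
  next
    assume ks: "k = s"
    have "hinv g \<circ> s \<circ> g = hinv g \<circ> (s \<circ> g)" by (simp add: comp_assoc)
    also have "\<dots> = hinv g \<circ> (g \<circ> s)" using g(2) by simp
    also have "\<dots> = (hinv g \<circ> g) \<circ> s" by (simp add: comp_assoc)
    finally show ?thesis using c ks by simp
  qed
qed

lemma supp_s_inv: "g \<in> S2inf \<Longrightarrow> g \<circ> s = s \<circ> g \<Longrightarrow> g -` supp s = supp s"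
proof -
  assume g: "g \<in> S2inf" "g \<circ> s = s \<circ> g"
  have inj: "inj g" using S2inf_bij[OF g(1)] bij_is_inj by blast
  have "s (g x) = g (s x)" for x using fun_cong[OF g(2), of x] by simp
  then have "(s (g x) \<noteq> g x) = (s x \<noteq> x)" for x using inj injD[OF inj, of "s x" x] by auto
  then show ?thesis unfolding supp_def by auto
qed

lemma orb_triv:
  assumes k: "k = id \<or> k = s" and B: "B = {} \<or> B = supp s"
    and t: "t \<in> centralizer Gsd (s, fcls {})"
  shows "inv\<^bsub>Gsd\<^esub> t \<otimes>\<^bsub>Gsd\<^esub> (k, fcls B) \<otimes>\<^bsub>Gsd\<^esub> t = (k, fcls B)"
proof -
  obtain g A where gA: "t = (g, fcls A)" "g \<in> S2inf" "clopen_set A" "g \<circ> s = s \<circ> g" "fcls (s -` A) = fcls A"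
    using cent_D[OF t] by blast
  have ck: "hinv g \<circ> k \<circ> g = k" by (rule conj_k[OF gA(2) gA(4) k])
  have gB: "g -` B = B" using B supp_s_inv[OF gA(2) gA(4)] by auto
  have kA: "k -` A = A \<or> k -` A = - A" using k gA(5) fcls_eq by auto
  have "fcls (sd (sd (k -` A) B) A) = fcls B"
    using kA
  proof
    assume e: "k -` A = A"
    have "sd (sd A B) A = B" by (auto simp: sd_def)
    then show ?thesis using e by simp
  next
    assume e: "k -` A = - A"
    have "sd (sd (- A) B) A = - B" by (auto simp: sd_def)
    then show ?thesis using e by simp
  qed
  then show ?thesis unfolding gA(1) conj_Gsd[OF gA(2) gA(3)] ck gB by simp
qed

lemma main_loc:
  "fpc Gsd (s, fcls {}) = {(id, fcls {}), (s, fcls {}), (id, fcls (supp s)), (s, fcls (supp s))}"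
proof
  let ?C = "centralizer Gsd (s, fcls {})"
  show "{(id, fcls {}), (s, fcls {}), (id, fcls (supp s)), (s, fcls (supp s))} \<subseteq> fpc Gsd (s, fcls {})"
  proof
    fix h assume "h \<in> {(id, fcls {}), (s, fcls {}), (id, fcls (supp s)), (s, fcls (supp s))}"
    then obtain k B where h: "h = (k, fcls B)" and k: "k = id \<or> k = s" and B: "B = {} \<or> B = supp s"
      by blast
    have kS: "k \<in> S2inf" using k id_S2inf s_S2inf by blast
    have cB: "clopen_set B" using B clopen_empty(1) supp_loc[OF s_S2inf] clopen_loc by blast
    have hc: "h \<in> carrier Gsd" unfolding h carrier_Gsd using kS cB by blast
    have "{inv\<^bsub>Gsd\<^esub> t \<otimes>\<^bsub>Gsd\<^esub> h \<otimes>\<^bsub>Gsd\<^esub> t | t. t \<in> ?C} \<subseteq> {h}"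
      unfolding h using orb_triv[OF k B] by blast
    then have "finite {inv\<^bsub>Gsd\<^esub> t \<otimes>\<^bsub>Gsd\<^esub> h \<otimes>\<^bsub>Gsd\<^esub> t | t. t \<in> ?C}"
      using finite_subset by blast
    then show "h \<in> fpc Gsd (s, fcls {})" unfolding fpc_def using hc by blast
  qed
next
  let ?C = "centralizer Gsd (s, fcls {})"
  show "fpc Gsd (s, fcls {}) \<subseteq> {(id, fcls {}), (s, fcls {}), (id, fcls (supp s)), (s, fcls (supp s))}"
  proof
    fix h assume hf: "h \<in> fpc Gsd (s, fcls {})"
    define Orb where "Orb = {inv\<^bsub>Gsd\<^esub> t \<otimes>\<^bsub>Gsd\<^esub> h \<otimes>\<^bsub>Gsd\<^esub> t | t. t \<in> ?C}"
    have hc: "h \<in> carrier Gsd" and fO: "finite Orb" using hf unfolding fpc_def Orb_def by auto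
    obtain k F where kF: "h = (k, F)" by (cases h)
    have "(k, F) \<in> carrier Gsd" using hc kF by simp
    then obtain B where h: "h = (k, fcls B)" and kS: "k \<in> S2inf" and cB: "clopen_set B"
      using kF unfolding carrier_Gsd by auto
    have orbA: "(k, fcls (sd (sd (k -` A) B) A)) \<in> Orb" if A: "clopen_set A" "s -` A = A" for A
    proof -
      have tC: "(id, fcls A) \<in> ?C" using cent_I[OF id_S2inf A(1)] A(2) by simp
      have "inv\<^bsub>Gsd\<^esub> (id, fcls A) \<otimes>\<^bsub>Gsd\<^esub> h \<otimes>\<^bsub>Gsd\<^esub> (id, fcls A) = (k, fcls (sd (sd (k -` A) B) A))"
        unfolding h conj_Gsd[OF id_S2inf A(1)] by simp
      note e = this
      show ?thesis unfolding Orb_def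
        by (rule CollectI, rule exI[of _ "(id, fcls A)"], rule conjI, rule e[symmetric], rule tC)
    qed
    have orbG: "(hinv g \<circ> k \<circ> g, fcls (g -` B)) \<in> Orb" if g: "g \<in> S2inf" "g \<circ> s = s \<circ> g" for g
    proof -
      have tC: "(g, fcls {}) \<in> ?C" using cent_I[OF g(1) clopen_empty(1) g(2)] by simp
      have "inv\<^bsub>Gsd\<^esub> (g, fcls {}) \<otimes>\<^bsub>Gsd\<^esub> h \<otimes>\<^bsub>Gsd\<^esub> (g, fcls {}) = (hinv g \<circ> k \<circ> g, fcls (g -` B))"
        unfolding h conj_Gsd[OF g(1) clopen_empty(1)] by simp
      note e = this
      show ?thesis unfolding Orb_def
        by (rule CollectI, rule exI[of _ "(g, fcls {})"], rule conjI, rule e[symmetric], rule tC)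
    qed
    have korb: "\<forall>x. k x = x \<or> k x = s x"
    proof (rule ccontr)
      assume "\<not> (\<forall>x. k x = x \<or> k x = s x)"
      then obtain x where "k x \<noteq> x" "k x \<noteq> s x" by blast
      then have inf: "infinite {(k, fcls (sd (sd (k -` A) B) A)) | A. clopen_set A \<and> s -` A = A}"
        by (rule step1[OF kS])
      have "{(k, fcls (sd (sd (k -` A) B) A)) | A. clopen_set A \<and> s -` A = A} \<subseteq> Orb"
        using orbA by blast
      then show False using inf fO finite_subset by blast
    qed
    define W where "W = supp k"
    have WS: "W \<subseteq> supp s" unfolding W_def supp_def using korb by auto
    have kk: "k = id \<or> k = s"
    proof (cases "W = {} \<or> W = supp s")
      case True
      then show ?thesis
      proof
        assume "W = {}"
        then have "\<forall>x. k x = x" unfolding W_def supp_def by blast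
        then show ?thesis by (auto simp: fun_eq_iff)
      next
        assume WW: "W = supp s"
        have "k x = s x" for x
        proof (cases "s x = x")
          case True
          then have "x \<notin> W" using WW unfolding supp_def by blast
          then show ?thesis using True unfolding W_def supp_def by simp
        next
          case False
          then have "x \<in> W" using WW unfolding supp_def by blast
          then show ?thesis using korb unfolding W_def supp_def by auto
        qed
        then show ?thesis by (auto simp: fun_eq_iff)
      qed
    next
      case False
      have lW: "loc W" unfolding W_def by (rule supp_loc[OF kS])
      have n1: "W \<noteq> {}" "W \<noteq> supp s" using False by auto
      have n2: "W \<noteq> UNIV" using WS n1(2) by auto
      have n3: "W \<noteq> - supp s" using WS n1(1) by auto
      have inf: "infinite {fcls (g -` W) | g. g \<in> S2inf \<and> g \<circ> s = s \<circ> g}"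
        by (rule key[OF lW n1(1) n2 n1(2) n3])
      have sub: "{fcls (g -` W) | g. g \<in> S2inf \<and> g \<circ> s = s \<circ> g} \<subseteq> (\<lambda>p. fcls (supp (fst p))) ` Orb"
      proof
        fix Z assume "Z \<in> {fcls (g -` W) | g. g \<in> S2inf \<and> g \<circ> s = s \<circ> g}"
        then obtain g where g: "Z = fcls (g -` W)" "g \<in> S2inf" "g \<circ> s = s \<circ> g" by blast
        have bij: "bij g" using S2inf_bij[OF g(2)] .
        have "supp (hinv g \<circ> k \<circ> g) = g -` W"
        proof (rule Set.set_eqI)
          fix y
          have "(hinv g (k (g y)) \<noteq> y) = (k (g y) \<noteq> g y)"
            using bij_inv_eq_iff[OF bij, of y "k (g y)"] by auto
          then show "y \<in> supp (hinv g \<circ> k \<circ> g) \<longleftrightarrow> y \<in> g -` W" unfolding W_def supp_def by simp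
        qed
        then have "Z = (\<lambda>p. fcls (supp (fst p))) (hinv g \<circ> k \<circ> g, fcls (g -` B))" using g(1) by simp
        then show "Z \<in> (\<lambda>p. fcls (supp (fst p))) ` Orb" using orbG[OF g(2) g(3)] by blast
      qed
      have "finite ((\<lambda>p. fcls (supp (fst p))) ` Orb)" using fO by simp
      then show ?thesis using sub inf finite_subset by blast
    qed
    have BB: "B = {} \<or> B = UNIV \<or> B = supp s \<or> B = - supp s"
    proof (rule ccontr)
      assume nB: "\<not> (B = {} \<or> B = UNIV \<or> B = supp s \<or> B = - supp s)"
      have lB: "loc B" using cB clopen_loc by blast
      have inf: "infinite {fcls (g -` B) | g. g \<in> S2inf \<and> g \<circ> s = s \<circ> g}"
        using key[OF lB] nB by blast
      have sub: "{fcls (g -` B) | g. g \<in> S2inf \<and> g \<circ> s = s \<circ> g} \<subseteq> snd ` Orb"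
      proof
        fix Z assume "Z \<in> {fcls (g -` B) | g. g \<in> S2inf \<and> g \<circ> s = s \<circ> g}"
        then obtain g where g: "Z = fcls (g -` B)" "g \<in> S2inf" "g \<circ> s = s \<circ> g" by blast
        have "Z = snd (hinv g \<circ> k \<circ> g, fcls (g -` B))" using g(1) by simp
        then show "Z \<in> snd ` Orb" using orbG[OF g(2) g(3)] by blast
      qed
      have "finite (snd ` Orb)" using fO by simp
      then show False using sub inf finite_subset by blast
    qed
    have fU: "fcls UNIV = fcls {}" using fcls_compl[of "{}"] by simp
    have fB: "fcls B = fcls {} \<or> fcls B = fcls (supp s)"
      using BB by (elim disjE) (simp_all add: fU)
    show "h \<in> {(id, fcls {}), (s, fcls {}), (id, fcls (supp s)), (s, fcls (supp s))}"
      unfolding h using kk fB by (elim disjE) simp_all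
  qed
qed

end

theorem proposition3p4:
  assumes "s \<in> S2inf" and "s \<circ> s = id" and "s \<noteq> id"
  shows "fpc Gsd (s, fcls {}) =
           {(id, fcls {}), (s, fcls {}), (id, fcls (supp s)), (s, fcls (supp s))}"
proof -
  obtain n \<sigma> where ns: "\<sigma> permutes {xs. length xs = n}" "s = lift_perm n \<sigma>"
    using assms(1) by (auto simp: S2inf_def)
  have "invo n \<sigma>" unfolding invo_def using ns assms(2) by simp
  from invo.main_loc[OF this] show ?thesis using ns(2) by simp
qed

end
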